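(* Let $(E,\mathcal{E},\nu)$ be a $\sigma$-finite measure space, $\phi$ a Young function satisfying the $\Delta_2$-condition, $w$ a weight function, and $\Psi:E\to E$ a non-singular measurable transformation inducing the composition operator $C_\Psi f=f\circ\Psi$ on the Orlicz-Lorentz space $L_{(\phi,w)}$. If the Radon–Nikodym derivative $f_\Psi=\frac{d(\nu\circ\Psi^{-1})}{d\nu}$ is bounded away from zero on its support and $\Psi^{-1}(\mathcal{E})=\mathcal{E}$, then $\mathcal{D}(C_\Psi)=0$.
   Context: A Young function is a convex $\phi:[0,\infty)\to[0,\infty)$ with $\phi(x)=0\iff x=0$ and $\lim_{x\to\infty}\phi(x)=\infty$; $\Delta_2$-condition: $\phi(2x)\le k\phi(x)$ for some $k>0$ and all $x>0$. A weight function is a non-increasing locally integrable $w:(0,\infty)\to(0,\infty)$ with $\int_0^\infty w=\infty$. For measurable $f$, $\nu_f(s)=\nu\{|f|>s\}$, $f^*(t)=\inf\{s>0:\nu_f(s)\le t\}$; $L_{(\phi,w)}$ is the space of measurable $f:E\to\mathbb{C}$ with $\int_0^\infty\phi(\alpha f^*(t))w(t)\,dt<\infty$ for some $\alpha>0$, with the Luxemburg norm. $\Psi$ non-singular: $\nu(\Psi^{-1}(S))=0$ whenever $\nu(S)=0$. A function $h$ is bounded away from zero on its support if there is $\epsilon>0$ with $h(x)\ge\epsilon$ for almost all $x\in\{h\neq0\}$. $\Psi^{-1}(\mathcal{E})=\{\Psi^{-1}(S):S\in\mathcal{E}\}$. The descent $\mathcal{D}(T)$ is the smallest non-negative integer $m$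 with $\mathcal{R}(T^{m+1})=\mathcal{R}(T^m)$ ($\mathcal{R}$ = range, $T^0=I$), and $\infty$ if none exists. *)

theory Defs
  imports "HOL-Analysis.Analysis"
begin

definition young_function :: "(real \<Rightarrow> real) \<Rightarrow> bool" where
  "young_function \<phi> \<longleftrightarrow>
     convex_on {0..} \<phi> \<and> (\<forall>x\<ge>0. \<phi> x \<ge> 0) \<and>
     (\<forall>x\<ge>0. \<phi> x = 0 \<longleftrightarrow> x = 0) \<and> filterlim \<phi> at_top at_top"

definition delta2 :: "(real \<Rightarrow> real) \<Rightarrow> bool" where
  "delta2 \<phi> \<longleftrightarrow> (\<exists>k>0. \<forall>x>0. \<phi> (2 * x) \<le> k * \<phi> x)"

definition weight_function :: "(real \<Rightarrow> real) \<Rightarrow> bool" where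
  "weight_function w \<longleftrightarrow>
     (\<forall>t>0. w t > 0) \<and> (\<forall>s t. 0 < s \<longrightarrow> s \<le> t \<longrightarrow> w t \<le> w s) \<and>
     (\<forall>t>0. set_integrable lborel {0<..t} w) \<and>
     (\<integral>\<^sup>+ t. indicator {0<..} t * ennreal (w t) \<partial>lborel) = \<infinity>"

definition distrib_fun :: "'a measure \<Rightarrow> ('a \<Rightarrow> complex) \<Rightarrow> real \<Rightarrow> ennreal" where
  "distrib_fun M f s = emeasure M {x \<in> space M. s < norm (f x)}"

definition rearr :: "'a measure \<Rightarrow> ('a \<Rightarrow> complex) \<Rightarrow> real \<Rightarrow> ereal" where
  "rearr M f t = Inf {ereal s | s. s > 0 \<and> distrib_fun M f s \<le> ennreal t}"

text \<open>The integrand phi(alpha f*(t)) w(t) is infinite wherever f*(t) is infinite, which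
  (f* being non-increasing) forces the integral to be infinite; hence we require f* finite.\<close>
definition orlicz_lorentz :: "'a measure \<Rightarrow> (real \<Rightarrow> real) \<Rightarrow> (real \<Rightarrow> real) \<Rightarrow> ('a \<Rightarrow> complex) set" where
  "orlicz_lorentz M \<phi> w = {f. f \<in> borel_measurable M \<and>
     (\<exists>\<alpha>>0. (\<forall>t>0. rearr M f t < \<infinity>) \<and>
        (\<integral>\<^sup>+ t. indicator {0<..} t *
            ennreal (\<phi> (\<alpha> * real_of_ereal (rearr M f t)) * w t) \<partial>lborel) < \<infinity>)}"

text \<open>Range of T^m on X, viewed modulo a.e. equality (union of the equivalence classes).\<close>
definition ae_range :: "'a measure \<Rightarrow> ('a \<Rightarrow> complex) set \<Rightarrow>
    (('a \<Rightarrow> complex) \<Rightarrow> ('a \<Rightarrow> complex)) \<Rightarrow> nat \<Rightarrow> ('a \<Rightarrow> complex) set" where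
  "ae_range M X T m = {g. \<exists>f\<in>X. AE x in M. g x = (T ^^ m) f x}"

definition descent :: "'a measure \<Rightarrow> ('a \<Rightarrow> complex) set \<Rightarrow>
    (('a \<Rightarrow> complex) \<Rightarrow> ('a \<Rightarrow> complex)) \<Rightarrow> enat" where
  "descent M X T = (if \<exists>m. ae_range M X T (Suc m) = ae_range M X T m
     then enat (LEAST m. ae_range M X T (Suc m) = ae_range M X T m) else \<infinity>)"

end

theory Submission
  imports Defs
begin

lemma factor_real:
  fixes g :: "'a \<Rightarrow> real" and \<Psi> :: "'a \<Rightarrow> 'a"
  assumes sets_eq: "{\<Psi> -` S \<inter> space M | S. S \<in> sets M} = sets M"
    and g: "g \<in> borel_measurable M"
  shows "\<exists>h \<in> borel_measurable M. \<forall>x\<in>space M. h (\<Psi> x) = g x"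
proof -
  have "\<forall>q::rat. \<exists>B. B \<in> sets M \<and> {x\<in>space M. g x < of_rat q} = \<Psi> -` B \<inter> space M"
  proof
    fix q :: rat
    have "{x\<in>space M. g x < of_rat q} \<in> sets M" using g by measurable
    then show "\<exists>B. B \<in> sets M \<and> {x\<in>space M. g x < of_rat q} = \<Psi> -` B \<inter> space M"
      using sets_eq by blast
  qed
  then obtain B where B: "\<And>q. B q \<in> sets M"
    and BB: "\<And>q. {x\<in>space M. g x < of_rat q} = \<Psi> -` B q \<inter> space M" by metis
  define H where "H z = (INF q\<in>UNIV. if z \<in> B q then ereal (of_rat q) else \<infinity>)" for z
  have Hm: "H \<in> borel_measurable M"
    unfolding H_def
    by (intro borel_measurable_INF) (auto intro!: measurable_If_set B)
  have HP: "H (\<Psi> x) = ereal (g x)" if x: "x \<in> space M" for x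
  proof -
    have mem: "\<Psi> x \<in> B q \<longleftrightarrow> g x < of_rat q" for q
      using BB[of q] x by blast
    show ?thesis
    proof (rule antisym)
      show "ereal (g x) \<le> H (\<Psi> x)"
        unfolding H_def by (rule INF_greatest) (auto simp: mem)
      show "H (\<Psi> x) \<le> ereal (g x)"
      proof (rule dense_ge)
        fix y assume "ereal (g x) < y"
        then obtain r where r: "g x < r" "ereal r \<le> y"
          by (metis dense ereal_dense2 less_eq_ereal_def less_ereal.simps(1)) 
        then obtain q where q: "g x < of_rat q" "of_rat q < r"
          using of_rat_dense by blast
        have "H (\<Psi> x) \<le> ereal (of_rat q)"
          unfolding H_def by (rule INF_lower2[of q]) (auto simp: mem q)
        also have "\<dots> \<le> y" using q r by (meson ereal_less_eq(3) less_eq_real_def order_trans)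
        finally show "H (\<Psi> x) \<le> y" .
      qed
    qed
  qed
  show ?thesis
    by (rule bexI[of _ "\<lambda>z. real_of_ereal (H z)"]) (auto simp: HP intro: measurable_compose[OF Hm borel_measurable_real_of_ereal])
qed

lemma rearr_nonneg: "0 \<le> rearr M f t"
  unfolding rearr_def by (rule Inf_greatest) auto

lemma rearr_antimono: "t \<le> t' \<Longrightarrow> rearr M f t' \<le> rearr M f t"
  unfolding rearr_def
  by (rule Inf_superset_mono) (fastforce intro: order_trans[OF _ ennreal_leI])

lemma phi_mono:
  assumes "young_function \<phi>" "0 \<le> x" "x \<le> y"
  shows "\<phi> x \<le> \<phi> y"
proof (cases "y = 0")
  case True then show ?thesis using assms by simp
next
  case False
  then have y: "y > 0" using assms by simp
  have c: "convex_on {0..} \<phi>" and nn: "\<And>x. x \<ge> 0 \<Longrightarrow> \<phi> x \<ge> 0" and z: "\<phi> 0 = 0"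
    using assms(1) unfolding young_function_def by auto
  define u where "u = x / y"
  have u: "0 \<le> u" "u \<le> 1" using assms y by (auto simp: u_def)
  have "x = (1 - u) *\<^sub>R 0 + u *\<^sub>R y" using y by (simp add: u_def)
  then have "\<phi> x = \<phi> ((1 - u) *\<^sub>R 0 + u *\<^sub>R y)" by simp
  also have "\<dots> \<le> (1 - u) * \<phi> 0 + u * \<phi> y"
    using c u y by (intro convex_onD) auto
  also have "\<dots> \<le> \<phi> y" using u nn[of y] y z by (simp add: mult_left_le_one_le)
  finally show ?thesis .
qed

lemma rearr_le:
  assumes e: "0 < e" and dist: "\<And>s. ennreal e * distrib_fun M h s \<le> distrib_fun M f s"
  shows "rearr M h t \<le> rearr M f (e * t)"
  unfolding rearr_def
proof (rule Inf_superset_mono, safe)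
  fix s assume s: "0 < s" "distrib_fun M f s \<le> ennreal (e * t)"
  have "ennreal e * distrib_fun M h s \<le> ennreal e * ennreal t"
  proof (cases "t \<ge> 0")
    case True
    then show ?thesis using dist[of s] s e by (metis ennreal_mult order_trans less_imp_le)
  next
    case False
    then have "e * t \<le> 0" using e by (simp add: mult_pos_neg less_imp_le)
    then have "distrib_fun M f s = 0" using s by (metis ennreal_eq_0_iff order.antisym zero_le)
    then have "ennreal e * distrib_fun M h s = 0" using dist[of s] by simp
    then show ?thesis by (metis zero_le)
  qed
  then have "distrib_fun M h s \<le> ennreal t"
    using e by (subst (asm) ennreal_mult_le_mult_iff) auto
  then show "\<exists>s'. ereal s = ereal s' \<and> 0 < s' \<and> distrib_fun M h s' \<le> ennreal t"
    using s by auto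
qed

lemma member_OL:
  assumes f: "f \<in> orlicz_lorentz M \<phi> w" and yf: "young_function \<phi>" and wf: "weight_function w"
    and hm: "h \<in> borel_measurable M"
    and e: "0 < e" "e \<le> 1"
    and dist: "\<And>s. ennreal e * distrib_fun M h s \<le> distrib_fun M f s"
  shows "h \<in> orlicz_lorentz M \<phi> w"
proof -
  obtain \<alpha> where a: "\<alpha> > 0" and fin: "\<forall>t>0. rearr M f t < \<infinity>"
    and int: "(\<integral>\<^sup>+ t. indicator {0<..} t *
            ennreal (\<phi> (\<alpha> * real_of_ereal (rearr M f t)) * w t) \<partial>lborel) < \<infinity>"
    using f unfolding orlicz_lorentz_def by auto
  have wpos: "\<And>t. t > 0 \<Longrightarrow> w t > 0" and wmono: "\<And>s t. 0 < s \<Longrightarrow> s \<le> t \<Longrightarrow> w t \<le> w s"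
    using wf unfolding weight_function_def by auto
  have phinn: "\<And>x. x \<ge> 0 \<Longrightarrow> \<phi> x \<ge> 0" using yf unfolding young_function_def by auto
  define Rf where "Rf u = real_of_ereal (rearr M f u)" for u
  define Rh where "Rh u = real_of_ereal (rearr M h u)" for u
  define G where "G u = \<phi> (\<alpha> * Rf u) * w u" for u
  define F where "F u = indicator {0<..} u * ennreal (G u)" for u :: real
  have hle: "rearr M h t \<le> rearr M f (e * t)" for t
    using rearr_le[OF e(1) dist] .
  have hfin: "\<forall>t>0. rearr M h t < \<infinity>"
  proof (intro allI impI)
    fix t :: real assume "t > 0"
    then have "e * t > 0" using e by simp
    then show "rearr M h t < \<infinity>" using hle[of t] fin by (meson order.strict_trans1)
  qed
  have Rf_nn: "Rf u \<ge> 0" for u unfolding Rf_def using rearr_nonneg[of M f u]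
    by (simp add: real_of_ereal_pos)
  have Rf_anti: "Rf v \<le> Rf u" if "0 < u" "u \<le> v" for u v
    unfolding Rf_def using that fin rearr_antimono[of u v M f] rearr_nonneg[of M f v]
    by (intro real_of_ereal_positive_mono) auto
  have Gm: "G \<in> borel_measurable (restrict_space borel {0<..})"
  proof -
    have "mono_on {0<..} (\<lambda>u. - \<phi> (\<alpha> * Rf u))"
    proof (rule mono_onI)
      fix r s :: real assume rs: "r \<in> {0<..}" "s \<in> {0<..}" "r \<le> s"
      then have "Rf s \<le> Rf r" using Rf_anti by simp
      then have "\<alpha> * Rf s \<le> \<alpha> * Rf r" using a by (simp add: mult_left_mono)
      moreover have "0 \<le> \<alpha> * Rf s" using a Rf_nn[of s] by simp
      ultimately show "- \<phi> (\<alpha> * Rf r) \<le> - \<phi> (\<alpha> * Rf s)"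
        using phi_mono[OF yf] by simp
    qed
    then have 1: "(\<lambda>u. - \<phi> (\<alpha> * Rf u)) \<in> borel_measurable (restrict_space borel {0<..})"
      by (rule borel_measurable_mono_on_fnc)
    have "mono_on {0<..} (\<lambda>u. - w u)"
      unfolding mono_on_def using wmono by auto
    then have 2: "(\<lambda>u. - w u) \<in> borel_measurable (restrict_space borel {0<..})"
      by (rule borel_measurable_mono_on_fnc)
    have "(\<lambda>u. (- (- \<phi> (\<alpha> * Rf u))) * (- (- w u))) \<in> borel_measurable (restrict_space borel {0<..})"
      using 1 2 by measurable
    then show ?thesis unfolding G_def by simp
  qed
  have Fm: "F \<in> borel_measurable borel"
  proof -
    have "(\<lambda>u. indicator {0<..} u *\<^sub>R G u) \<in> borel_measurable borel"
      using Gm by (subst (asm) borel_measurable_restrict_space_iff) auto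
    then have "(\<lambda>u. ennreal (indicator {0<..} u *\<^sub>R G u)) \<in> borel_measurable borel"
      by measurable
    moreover have "ennreal (indicator {0<..} u *\<^sub>R G u) = F u" for u
      unfolding F_def by (auto simp: indicator_def)
    ultimately show ?thesis by simp
  qed
  have intF: "integral\<^sup>N lborel F < \<infinity>" using int unfolding F_def G_def Rf_def .
  have aff: "integral\<^sup>N lborel F = ennreal \<bar>e\<bar> * (\<integral>\<^sup>+x. F (0 + e * x) \<partial>lborel)"
    using nn_integral_real_affine[OF Fm, of e 0] e by simp
  have int2: "(\<integral>\<^sup>+x. F (e * x) \<partial>lborel) < \<infinity>"
  proof -
    have "ennreal e * (\<integral>\<^sup>+x. F (e * x) \<partial>lborel) < \<infinity>" using aff intF e by simp
    then show ?thesis using e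
      by (auto simp: ennreal_mult_less_top)
  qed
  have pw: "indicator {0<..} t * ennreal (\<phi> (\<alpha> * Rh t) * w t) \<le> F (e * t)" for t
  proof (cases "t > 0")
    case True
    then have et: "e * t > 0" "e * t \<le> t" using e by (auto simp: mult_le_cancel_right1)
    have "Rh t \<le> Rf (e * t)" unfolding Rh_def Rf_def
      using hle[of t] rearr_nonneg[of M h t] fin et
      by (intro real_of_ereal_positive_mono) auto
    moreover have "Rh t \<ge> 0" unfolding Rh_def using rearr_nonneg[of M h t]
      by (simp add: real_of_ereal_pos)
    ultimately have "\<phi> (\<alpha> * Rh t) \<le> \<phi> (\<alpha> * Rf (e * t))"
      using a by (intro phi_mono[OF yf]) (auto intro: mult_left_mono)
    moreover have "w t \<le> w (e * t)" using wmono et by auto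
    moreover have "\<phi> (\<alpha> * Rh t) \<ge> 0" using phinn a \<open>Rh t \<ge> 0\<close> by auto
    moreover have "w t \<ge> 0" using wpos True by (simp add: less_imp_le)
    moreover have "\<phi> (\<alpha> * Rf (e * t)) \<ge> 0" using phinn a Rf_nn[of "e*t"] by auto
    ultimately have "\<phi> (\<alpha> * Rh t) * w t \<le> G (e * t)"
      unfolding G_def by (intro mult_mono) auto
    then show ?thesis using True et unfolding F_def by (auto intro: ennreal_leI)
  qed (simp)
  have "(\<integral>\<^sup>+ t. indicator {0<..} t * ennreal (\<phi> (\<alpha> * Rh t) * w t) \<partial>lborel)
      \<le> (\<integral>\<^sup>+x. F (e * x) \<partial>lborel)"
    by (rule nn_integral_mono) (rule pw)
  also have "\<dots> < \<infinity>" by (rule int2)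
  finally show ?thesis
    unfolding orlicz_lorentz_def using hm a hfin unfolding Rh_def by auto
qed

theorem theorem4p1:
  fixes M :: "'a measure" and \<phi> w :: "real \<Rightarrow> real" and \<Psi> :: "'a \<Rightarrow> 'a"
  assumes "sigma_finite_measure M"
    and "young_function \<phi>" and "delta2 \<phi>"
    and "weight_function w"
    and "\<Psi> \<in> measurable M M"
    and "\<forall>S\<in>sets M. emeasure M S = 0 \<longrightarrow> emeasure M (\<Psi> -` S \<inter> space M) = 0"
    and "\<forall>f\<in>orlicz_lorentz M \<phi> w. f \<circ> \<Psi> \<in> orlicz_lorentz M \<phi> w"
    and "\<exists>\<epsilon>>0. AE x in M. RN_deriv M (distr M M \<Psi>) x \<noteq> 0 \<longrightarrow>
                           RN_deriv M (distr M M \<Psi>) x \<ge> \<epsilon>"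
    and "{\<Psi> -` S \<inter> space M | S. S \<in> sets M} = sets M"
  shows "descent M (orlicz_lorentz M \<phi> w) (\<lambda>f. f \<circ> \<Psi>) = 0"
proof -
  interpret sigma_finite_measure M by (rule assms(1))
  note Pm[measurable] = assms(5)
  define X where "X = orlicz_lorentz M \<phi> w"
  define N where "N = distr M M \<Psi>"
  define RN where "RN = RN_deriv M N"
  have RNm[measurable]: "RN \<in> borel_measurable M" unfolding RN_def by simp
  have ac: "absolutely_continuous M N"
    unfolding absolutely_continuous_def N_def
  proof
    fix S assume "S \<in> null_sets M"
    then show "S \<in> null_sets (distr M M \<Psi>)"
      using assms(6) by (auto simp: null_sets_def emeasure_distr)
  qed
  have dens: "density M RN = N"
    unfolding RN_def by (rule density_RN_deriv[OF ac]) (simp add: N_def)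
  obtain \<epsilon> :: ennreal where ep: "\<epsilon> > 0" and AEe: "AE x in M. RN x \<noteq> 0 \<longrightarrow> RN x \<ge> \<epsilon>"
    using assms(8) unfolding RN_def N_def by blast
  define e where "e = enn2real (min \<epsilon> 1)"
  have mt: "min \<epsilon> 1 < top" by (simp add: min.strict_coboundedI2)
  have e: "0 < e" "e \<le> 1" using ep mt unfolding e_def
    by (auto simp: enn2real_positive_iff enn2real_leI)
  have ee: "ennreal e \<le> \<epsilon>" unfolding e_def
    by (metis ennreal_enn2real_if min.cobounded1 min.cobounded2 ennreal_one_less_top order.strict_trans1 order.trans zero_le)
  have AEe': "AE x in M. RN x \<noteq> 0 \<longrightarrow> RN x \<ge> ennreal e"
    using AEe by eventually_elim (use ee in auto)
  define Z where "Z = {z \<in> space M. RN z = 0}"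
  have Zm[measurable]: "Z \<in> sets M" unfolding Z_def by measurable
  have nullZ: "emeasure M (\<Psi> -` Z \<inter> space M) = 0"
  proof -
    have "emeasure M (\<Psi> -` Z \<inter> space M) = emeasure N Z"
      unfolding N_def by (simp add: emeasure_distr)
    also have "\<dots> = (\<integral>\<^sup>+x. RN x * indicator Z x \<partial>M)"
      unfolding dens[symmetric] by (simp add: emeasure_density)
    also have "\<dots> = 0"
      by (rule nn_integral_0_iff_AE[THEN iffD2]) (auto simp: Z_def indicator_def)
    finally show ?thesis .
  qed
  have key: "\<exists>h\<in>X. AE x in M. f x = h (\<Psi> x)" if fX: "f \<in> X" for f
  proof -
    have fm[measurable]: "f \<in> borel_measurable M" using fX unfolding X_def orlicz_lorentz_def by auto
    obtain hr where hr[measurable]: "hr \<in> borel_measurable M" and hr': "\<forall>x\<in>space M. hr (\<Psi> x) = Re (f x)"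
      using factor_real[OF assms(9), of "\<lambda>x. Re (f x)"] measurable_compose[OF fm borel_measurable_Re] by blast
    obtain hi where hi[measurable]: "hi \<in> borel_measurable M" and hi': "\<forall>x\<in>space M. hi (\<Psi> x) = Im (f x)"
      using factor_real[OF assms(9), of "\<lambda>x. Im (f x)"] measurable_compose[OF fm borel_measurable_Im] by blast
    define h where "h z = (if z \<in> Z then 0 else complex_of_real (hr z) + \<i> * complex_of_real (hi z))" for z
    have hm[measurable]: "h \<in> borel_measurable M" unfolding h_def by (intro measurable_If_set) auto
    have AEh: "AE x in M. f x = h (\<Psi> x)"
    proof -
      have "AE x in M. x \<notin> \<Psi> -` Z \<inter> space M"
        using nullZ by (intro AE_not_in) (auto simp: null_sets_def)
      then show ?thesis
      proof (rule AE_mp, intro AE_I2 impI)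
        fix x assume x: "x \<in> space M" "x \<notin> \<Psi> -` Z \<inter> space M"
        then have "RN (\<Psi> x) \<noteq> 0" using measurable_space[OF Pm x(1)] by (auto simp: Z_def)
        then show "f x = h (\<Psi> x)" using hr' hi' x by (simp add: h_def Z_def complex_eq_iff)
      qed
    qed
    have dist: "ennreal e * distrib_fun M h s \<le> distrib_fun M f s" for s
    proof (cases "s < 0")
      case True
      then have "distrib_fun M h s = emeasure M (space M)" "distrib_fun M f s = emeasure M (space M)"
        unfolding distrib_fun_def by (auto intro!: arg_cong[where f="emeasure M"] less_le_trans[OF True])
      then show ?thesis using e
        by (metis ennreal_le_1 mult_left_le_one_le mult_1 mult_right_mono zero_le)
    next
      case False
      define A where "A = {z \<in> space M. s < norm (h z)}"
      have Am[measurable]: "A \<in> sets M" unfolding A_def by measurable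
      have AZ: "z \<in> A \<Longrightarrow> RN z \<noteq> 0" for z using False by (auto simp: A_def h_def Z_def)
      have "distrib_fun M f s = emeasure M (\<Psi> -` A \<inter> space M)"
        unfolding distrib_fun_def
      proof (rule emeasure_eq_AE)
        show "AE x in M. (x \<in> {x \<in> space M. s < cmod (f x)}) = (x \<in> \<Psi> -` A \<inter> space M)"
          using AEh by eventually_elim (auto simp: A_def measurable_space[OF Pm])
      qed auto
      also have "\<dots> = emeasure N A" unfolding N_def by (simp add: emeasure_distr)
      also have "\<dots> = (\<integral>\<^sup>+x. RN x * indicator A x \<partial>M)"
        unfolding dens[symmetric] by (simp add: emeasure_density)
      also have "\<dots> \<ge> (\<integral>\<^sup>+x. ennreal e * indicator A x \<partial>M)"
        using AEe' by (intro nn_integral_mono_AE) (auto simp: indicator_def AZ elim!: eventually_mono)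
      also have "(\<integral>\<^sup>+x. ennreal e * indicator A x \<partial>M) = ennreal e * emeasure M A"
        by (simp add: nn_integral_cmult_indicator)
      finally show ?thesis unfolding distrib_fun_def A_def .
    qed
    have "h \<in> X" unfolding X_def
      by (rule member_OL[OF fX[unfolded X_def] assms(2) assms(4) hm e dist])
    with AEh show ?thesis by blast
  qed
  have eq: "ae_range M X (\<lambda>f. f \<circ> \<Psi>) (Suc 0) = ae_range M X (\<lambda>f. f \<circ> \<Psi>) 0"
  proof (intro set_eqI iffI)
    fix g assume "g \<in> ae_range M X (\<lambda>f. f \<circ> \<Psi>) (Suc 0)"
    then obtain f where "f \<in> X" "AE x in M. g x = (f \<circ> \<Psi>) x" by (auto simp: ae_range_def)
    moreover have "f \<circ> \<Psi> \<in> X" using \<open>f \<in> X\<close> assms(7) unfolding X_def by auto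
    ultimately show "g \<in> ae_range M X (\<lambda>f. f \<circ> \<Psi>) 0"
      unfolding ae_range_def by (intro CollectI bexI[of _ "f \<circ> \<Psi>"]) auto
  next
    fix g assume "g \<in> ae_range M X (\<lambda>f. f \<circ> \<Psi>) 0"
    then obtain f where f: "f \<in> X" "AE x in M. g x = f x" by (auto simp: ae_range_def)
    obtain h where h: "h \<in> X" "AE x in M. f x = h (\<Psi> x)" using key[OF f(1)] by blast
    have "AE x in M. g x = (h \<circ> \<Psi>) x" using f(2) h(2) by eventually_elim simp
    then show "g \<in> ae_range M X (\<lambda>f. f \<circ> \<Psi>) (Suc 0)" using h(1) by (auto simp: ae_range_def)
  qed
  then show ?thesis unfolding descent_def X_def[symmetric]
    by (auto simp: zero_enat_def intro!: Least_eq_0)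
qed

end
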